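(* Let $R$ be a finite principal left ideal ring, $<$ a respectful order on $R$, $B$ an ordered basis of $R^n$, and $P$ a left multiplicative property on $R^n$ with $P[0]$ false. Then each code $C_i$ produced by the greedy algorithm is a free left $R$-module, and the vectors $a_j$ ($j\le i$) selected by the algorithm up to step $i$ form a basis of $C_i$.
   Context: $R^\ast$ is the unit group of $R$. A property $P:R^n\to\{\text{true},\text{false}\}$ is left multiplicative if $P[ux]=P[x]$ for all $u\in R^\ast$, $x\in R^n$. A total order $<$ on $R$ is respectful if for all nonzero $x,y\in R$ with $Rx\supsetneq Ry$ there is $\alpha\in R^\ast$ with $\alpha x<uy$ for all $u\in R^\ast$. Fix an ordered basis $B=(b_1,\dots,b_n)$ of the free left module $R^n$; put $V_0=\{0\}$ and $V_i=Rb_1+\dots+Rb_i$. The lexicographic order on $R^n$: if $x\in V_{i-1}$ and $y\in V_i\setminus V_{i-1}$ then $x<y$; if $x\ne y$ both lie in $V_i\setminus V_{i-1}$, write $x=\sum_{j\le i}x_jb_j$, $y=\sum_{j\le i}y_jb_j$, let $k$ be the largest index with $x_k\ne y_k$, and set $x<y$ iff $x_k<y_k$ in $R$. Fix a set $\Gamma\subseteq R$ containing one generator of each nonzero left ideal of $R$. Greedy algorithm: $C_0=\{0\}$; for $i=1,\dots,n$, let $a_i$ be the smallest vector of $V_i\setminus V_{i-1}$ (if any) such that $P[\gamma a_i+c]$ is true for all $\gamma\in\Gamma$ and all $c\in C_{i-1}$; if such $a_i$ exists ("is selected") set $C_i=Ra_i+C_{i-1}$, otherwise $C_i=C_{i-1}$.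 The lexicode is $C(<,B,P):=C_n$. *)

theory Defs
  imports Main
begin

text \<open>Vectors of R^n are functions nat => 'a supported on {..<n}; module operations
  are componentwise, with scalars acting from the left.\<close>

definition Rn :: "nat \<Rightarrow> (nat \<Rightarrow> 'a::zero) set" where
  "Rn n = {x. \<forall>k. n \<le> k \<longrightarrow> x k = 0}"

definition smult :: "'a::times \<Rightarrow> (nat \<Rightarrow> 'a) \<Rightarrow> (nat \<Rightarrow> 'a)" where
  "smult r x = (\<lambda>k. r * x k)"

definition vzero :: "nat \<Rightarrow> 'a::zero" where
  "vzero = (\<lambda>k. 0)"

definition lcomb :: "(nat \<Rightarrow> 'a::semiring_0) \<Rightarrow> (nat \<Rightarrow> nat \<Rightarrow> 'a) \<Rightarrow> nat set \<Rightarrow> (nat \<Rightarrow> 'a)" where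
  "lcomb c v J = (\<lambda>k. \<Sum>j\<in>J. c j * v j k)"

definition left_ideal :: "'a::ring_1 set \<Rightarrow> bool" where
  "left_ideal I \<longleftrightarrow> 0 \<in> I \<and> (\<forall>x\<in>I. \<forall>y\<in>I. x + y \<in> I) \<and> (\<forall>r x. x \<in> I \<longrightarrow> r * x \<in> I)"

definition principal_left_ideal_ring :: "'a::ring_1 itself \<Rightarrow> bool" where
  "principal_left_ideal_ring _ \<longleftrightarrow>
     (\<forall>I::'a set. left_ideal I \<longrightarrow> (\<exists>g. I = range (\<lambda>r. r * g)))"

definition unit_ring :: "'a::ring_1 \<Rightarrow> bool" where
  "unit_ring u \<longleftrightarrow> (\<exists>v. u * v = 1 \<and> v * u = 1)"

definition strict_total_order :: "('a \<Rightarrow> 'a \<Rightarrow> bool) \<Rightarrow> bool" where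
  "strict_total_order lt \<longleftrightarrow> (\<forall>x. \<not> lt x x) \<and> (\<forall>x y z. lt x y \<longrightarrow> lt y z \<longrightarrow> lt x z)
     \<and> (\<forall>x y. x \<noteq> y \<longrightarrow> lt x y \<or> lt y x)"

definition respectful :: "('a::ring_1 \<Rightarrow> 'a \<Rightarrow> bool) \<Rightarrow> bool" where
  "respectful lt \<longleftrightarrow> strict_total_order lt \<and>
     (\<forall>x y. x \<noteq> 0 \<longrightarrow> y \<noteq> 0 \<longrightarrow> range (\<lambda>r. r * y) \<subset> range (\<lambda>r. r * x) \<longrightarrow>
        (\<exists>\<alpha>. unit_ring \<alpha> \<and> (\<forall>u. unit_ring u \<longrightarrow> lt (\<alpha> * x) (u * y))))"

definition left_multiplicative :: "nat \<Rightarrow> ((nat \<Rightarrow> 'a::ring_1) \<Rightarrow> bool) \<Rightarrow> bool" where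
  "left_multiplicative n P \<longleftrightarrow> (\<forall>u x. unit_ring u \<longrightarrow> x \<in> Rn n \<longrightarrow> P (smult u x) = P x)"

definition ordered_basis :: "nat \<Rightarrow> (nat \<Rightarrow> nat \<Rightarrow> 'a::ring_1) \<Rightarrow> bool" where
  "ordered_basis n b \<longleftrightarrow> (\<forall>j\<in>{1..n}. b j \<in> Rn n) \<and>
     (\<forall>x\<in>Rn n. \<exists>!c. (\<forall>j. j \<notin> {1..n} \<longrightarrow> c j = 0) \<and> x = lcomb c b {1..n})"

definition Vsp :: "(nat \<Rightarrow> nat \<Rightarrow> 'a::ring_1) \<Rightarrow> nat \<Rightarrow> (nat \<Rightarrow> 'a) set" where
  "Vsp b i = {lcomb c b {1..i} | c. True}"

definition lex_less :: "('a::ring_1 \<Rightarrow> 'a \<Rightarrow> bool) \<Rightarrow> nat \<Rightarrow> (nat \<Rightarrow> nat \<Rightarrow> 'a)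
    \<Rightarrow> (nat \<Rightarrow> 'a) \<Rightarrow> (nat \<Rightarrow> 'a) \<Rightarrow> bool" where
  "lex_less lt n b x y \<longleftrightarrow> (\<exists>i\<in>{1..n}.
     (x \<in> Vsp b (i - 1) \<and> y \<in> Vsp b i - Vsp b (i - 1)) \<or>
     (x \<in> Vsp b i - Vsp b (i - 1) \<and> y \<in> Vsp b i - Vsp b (i - 1) \<and> x \<noteq> y \<and>
      (\<exists>cx cy. x = lcomb cx b {1..i} \<and> y = lcomb cy b {1..i} \<and>
         (let k = Max {j\<in>{1..i}. cx j \<noteq> cy j} in lt (cx k) (cy k)))))"

definition greedy_sel :: "('a::ring_1 \<Rightarrow> 'a \<Rightarrow> bool) \<Rightarrow> nat \<Rightarrow> (nat \<Rightarrow> nat \<Rightarrow> 'a)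
    \<Rightarrow> ((nat \<Rightarrow> 'a) \<Rightarrow> bool) \<Rightarrow> 'a set \<Rightarrow> nat \<Rightarrow> (nat \<Rightarrow> 'a) set \<Rightarrow> (nat \<Rightarrow> 'a) option" where
  "greedy_sel lt n b P \<Gamma> i C =
     (let S = {a \<in> Vsp b i - Vsp b (i - 1). \<forall>\<gamma>\<in>\<Gamma>. \<forall>c\<in>C. P (\<lambda>k. \<gamma> * a k + c k)} in
      if S = {} then None
      else Some (THE a. a \<in> S \<and> (\<forall>y\<in>S. y \<noteq> a \<longrightarrow> lex_less lt n b a y)))"

fun greedy_code :: "('a::ring_1 \<Rightarrow> 'a \<Rightarrow> bool) \<Rightarrow> nat \<Rightarrow> (nat \<Rightarrow> nat \<Rightarrow> 'a)
    \<Rightarrow> ((nat \<Rightarrow> 'a) \<Rightarrow> bool) \<Rightarrow> 'a set \<Rightarrow> nat \<Rightarrow> (nat \<Rightarrow> 'a) set" where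
  "greedy_code lt n b P \<Gamma> 0 = {vzero}"
| "greedy_code lt n b P \<Gamma> (Suc i) =
     (case greedy_sel lt n b P \<Gamma> (Suc i) (greedy_code lt n b P \<Gamma> i) of
        None \<Rightarrow> greedy_code lt n b P \<Gamma> i
      | Some a \<Rightarrow> {(\<lambda>k. r * a k + c k) | r c. c \<in> greedy_code lt n b P \<Gamma> i})"

definition selected :: "('a::ring_1 \<Rightarrow> 'a \<Rightarrow> bool) \<Rightarrow> nat \<Rightarrow> (nat \<Rightarrow> nat \<Rightarrow> 'a)
    \<Rightarrow> ((nat \<Rightarrow> 'a) \<Rightarrow> bool) \<Rightarrow> 'a set \<Rightarrow> nat \<Rightarrow> bool" where
  "selected lt n b P \<Gamma> j \<longleftrightarrow> greedy_sel lt n b P \<Gamma> j (greedy_code lt n b P \<Gamma> (j - 1)) \<noteq> None"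

definition sel_vec :: "('a::ring_1 \<Rightarrow> 'a \<Rightarrow> bool) \<Rightarrow> nat \<Rightarrow> (nat \<Rightarrow> nat \<Rightarrow> 'a)
    \<Rightarrow> ((nat \<Rightarrow> 'a) \<Rightarrow> bool) \<Rightarrow> 'a set \<Rightarrow> nat \<Rightarrow> nat \<Rightarrow> 'a" where
  "sel_vec lt n b P \<Gamma> j = the (greedy_sel lt n b P \<Gamma> j (greedy_code lt n b P \<Gamma> (j - 1)))"

definition generator_system :: "'a::ring_1 set \<Rightarrow> bool" where
  "generator_system \<Gamma> \<longleftrightarrow> (\<forall>\<gamma>\<in>\<Gamma>. \<gamma> \<noteq> 0) \<and>
     (\<forall>I. left_ideal I \<and> I \<noteq> {0} \<longrightarrow> (\<exists>!\<gamma>. \<gamma> \<in> \<Gamma> \<and> I = range (\<lambda>r. r * \<gamma>)))"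

end

theory Submission
  imports Defs "HOL-Library.FuncSet"
begin

lemma lcomb_cong: "(\<And>j. j \<in> J \<Longrightarrow> c j = d j) \<Longrightarrow> lcomb c v J = lcomb d v J"
  unfolding lcomb_def by (rule ext, rule sum.cong) auto

lemma lcomb_ext_zero:
  assumes "i \<le> k"
  shows "lcomb (\<lambda>t. if t \<in> {1..i} then c t else 0) b {1..k} = lcomb c b {1..i}"
  unfolding lcomb_def
proof (rule ext, rule sum.mono_neutral_cong_right)
  fix m show "finite {1..k}" by simp
  show "{1..i} \<subseteq> {1..k}" using assms by auto
qed auto

lemma Vsp_mono: "j \<le> k \<Longrightarrow> Vsp b j \<subseteq> Vsp b k"
proof
  fix x assume "j \<le> k" "x \<in> Vsp b j"
  then obtain c where "x = lcomb c b {1..j}" unfolding Vsp_def by auto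
  then have "x = lcomb (\<lambda>t. if t \<in> {1..j} then c t else 0) b {1..k}"
    using lcomb_ext_zero[OF \<open>j \<le> k\<close>, of c b] by simp
  then show "x \<in> Vsp b k" unfolding Vsp_def by blast
qed

lemma Vsp_in_Rn:
  assumes "ordered_basis n b" "i \<le> n"
  shows "lcomb c b {1..i} \<in> Rn n"
proof -
  have "\<forall>j\<in>{1..i}. b j \<in> Rn n" using assms unfolding ordered_basis_def by auto
  then show ?thesis unfolding Rn_def lcomb_def by auto
qed

lemma coeff_unique:
  assumes ob: "ordered_basis n b" and "i \<le> n"
    and eq: "lcomb c b {1..i} = lcomb d b {1..i}" and j: "j \<in> {1..i}"
  shows "c j = d j"
proof -
  define c' where "c' = (\<lambda>t. if t \<in> {1..i} then c t else 0)"
  define d' where "d' = (\<lambda>t. if t \<in> {1..i} then d t else 0)"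
  have x: "lcomb c b {1..i} \<in> Rn n" using Vsp_in_Rn assms by blast
  have e1: "lcomb c' b {1..n} = lcomb c b {1..i}" unfolding c'_def using lcomb_ext_zero[OF assms(2), of c b] by simp
  have e2: "lcomb d' b {1..n} = lcomb c b {1..i}" unfolding d'_def using lcomb_ext_zero[OF assms(2), of d b] eq by simp
  have z1: "\<forall>t. t \<notin> {1..n} \<longrightarrow> c' t = 0" using assms unfolding c'_def by auto
  have z2: "\<forall>t. t \<notin> {1..n} \<longrightarrow> d' t = 0" using assms unfolding d'_def by auto
  from ob x have "\<exists>!e. (\<forall>t. t \<notin> {1..n} \<longrightarrow> e t = 0) \<and> lcomb c b {1..i} = lcomb e b {1..n}"
    unfolding ordered_basis_def by blast
  then have "c' = d'" using z1 z2 e1 e2 by (metis (no_types, lifting))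
  then have "c' j = d' j" by simp
  then show ?thesis using j unfolding c'_def d'_def by simp
qed

lemma Vsp_finite:
  assumes "finite (UNIV::'a::ring_1 set)"
  shows "finite (Vsp (b::nat \<Rightarrow> nat \<Rightarrow> 'a) i)"
proof -
  have "Vsp b i \<subseteq> (\<lambda>c. lcomb c b {1..i}) ` (\<Pi>\<^sub>E t\<in>{1..i}. UNIV)"
  proof
    fix x assume "x \<in> Vsp b i"
    then obtain c where x: "x = lcomb c b {1..i}" unfolding Vsp_def by auto
    have "x = lcomb (restrict c {1..i}) b {1..i}" unfolding x by (rule lcomb_cong) simp
    moreover have "restrict c {1..i} \<in> (\<Pi>\<^sub>E t\<in>{1..i}. UNIV)" by simp
    ultimately show "x \<in> (\<lambda>c. lcomb c b {1..i}) ` (\<Pi>\<^sub>E t\<in>{1..i}. UNIV)" by blast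
  qed
  moreover have "finite ((\<Pi>\<^sub>E t\<in>{1..i}. (UNIV::'a set)))"
    by (rule finite_PiE) (use assms in auto)
  ultimately show ?thesis using finite_subset by blast
qed

lemma layer_unique:
  assumes "x \<in> Vsp b i - Vsp b (i - 1)" "x \<in> Vsp b i' - Vsp b (i' - 1)"
  shows "i = i'"
proof (rule ccontr)
  assume "i \<noteq> i'"
  then have "i \<le> i' - 1 \<or> i' \<le> i - 1" by arith
  then show False
  proof
    assume "i \<le> i' - 1" then have "Vsp b i \<subseteq> Vsp b (i' - 1)" by (rule Vsp_mono)
    then show False using assms by blast
  next
    assume "i' \<le> i - 1" then have "Vsp b i' \<subseteq> Vsp b (i - 1)" by (rule Vsp_mono)
    then show False using assms by blast
  qed
qed

definition clex :: "('a \<Rightarrow> 'a \<Rightarrow> bool) \<Rightarrow> nat \<Rightarrow> (nat \<Rightarrow> 'a) \<Rightarrow> (nat \<Rightarrow> 'a) \<Rightarrow> bool" where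
  "clex lt i c d \<longleftrightarrow> {j\<in>{1..i}. c j \<noteq> d j} \<noteq> {} \<and>
     lt (c (Max {j\<in>{1..i}. c j \<noteq> d j})) (d (Max {j\<in>{1..i}. c j \<noteq> d j}))"

lemma Dsym: "{j\<in>{1..i}. c j \<noteq> d j} = {j\<in>{1..i}. d j \<noteq> c j}" by auto

lemma clex_asym:
  assumes "strict_total_order lt" "clex lt i c d" "clex lt i d c" shows False
proof -
  have irr: "\<And>x. \<not> lt x x" and tr: "\<And>x y z. lt x y \<Longrightarrow> lt y z \<Longrightarrow> lt x z"
    using assms(1) unfolding strict_total_order_def by blast+
  let ?D = "{j\<in>{1..i}. c j \<noteq> d j}"
  have "lt (c (Max ?D)) (d (Max ?D))" using assms(2) unfolding clex_def by blast
  moreover have "lt (d (Max ?D)) (c (Max ?D))" using assms(3) unfolding clex_def Dsym[of i d c] by blast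
  ultimately show False using irr tr by blast
qed

lemma clex_total:
  assumes "strict_total_order lt" "{j\<in>{1..i}. c j \<noteq> d j} \<noteq> {}"
  shows "clex lt i c d \<or> clex lt i d c"
proof -
  let ?D = "{j\<in>{1..i}. c j \<noteq> d j}"
  have "Max ?D \<in> ?D" using assms(2) by (intro Max_in) auto
  then have "c (Max ?D) \<noteq> d (Max ?D)" by auto
  moreover have "\<And>x y. x \<noteq> y \<Longrightarrow> lt x y \<or> lt y x"
    using assms(1) unfolding strict_total_order_def by blast
  ultimately have "lt (c (Max ?D)) (d (Max ?D)) \<or> lt (d (Max ?D)) (c (Max ?D))" by blast
  then show ?thesis using assms(2) unfolding clex_def Dsym[of i d c] by blast
qed

lemma clex_trans:
  assumes sto: "strict_total_order lt" and h1: "clex lt i c d" and h2: "clex lt i d e"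
  shows "clex lt i c e"
proof -
  define D1 where "D1 = {j\<in>{1..i}. c j \<noteq> d j}"
  define D2 where "D2 = {j\<in>{1..i}. d j \<noteq> e j}"
  define D3 where "D3 = {j\<in>{1..i}. c j \<noteq> e j}"
  define k1 where "k1 = Max D1"
  define k2 where "k2 = Max D2"
  have fin: "finite D1" "finite D2" "finite D3" unfolding D1_def D2_def D3_def by auto
  have ne: "D1 \<noteq> {}" "D2 \<noteq> {}" using h1 h2 unfolding clex_def D1_def D2_def by auto
  have k1in: "k1 \<in> D1" unfolding k1_def using fin ne by (intro Max_in) auto
  have k2in: "k2 \<in> D2" unfolding k2_def using fin ne by (intro Max_in) auto
  have a1: "\<And>j. j \<in> {1..i} \<Longrightarrow> j > k1 \<Longrightarrow> c j = d j"
  proof (rule ccontr)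
    fix j assume "j \<in> {1..i}" "j > k1" "c j \<noteq> d j"
    then have "j \<in> D1" unfolding D1_def by auto
    then have "j \<le> k1" unfolding k1_def using fin(1) by (rule Max_ge[rotated])
    then show False using \<open>j > k1\<close> by simp
  qed
  have a2: "\<And>j. j \<in> {1..i} \<Longrightarrow> j > k2 \<Longrightarrow> d j = e j"
  proof (rule ccontr)
    fix j assume "j \<in> {1..i}" "j > k2" "d j \<noteq> e j"
    then have "j \<in> D2" unfolding D2_def by auto
    then have "j \<le> k2" unfolding k2_def using fin(2) by (rule Max_ge[rotated])
    then show False using \<open>j > k2\<close> by simp
  qed
  have l1: "lt (c k1) (d k1)" using h1 unfolding clex_def k1_def D1_def by blast
  have l2: "lt (d k2) (e k2)" using h2 unfolding clex_def k2_def D2_def by blast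
  have irr: "\<And>x. \<not> lt x x" and tr: "\<And>x y z. lt x y \<Longrightarrow> lt y z \<Longrightarrow> lt x z"
    using sto unfolding strict_total_order_def by blast+
  define k where "k = max k1 k2"
  have kin: "k \<in> {1..i}" using k1in k2in unfolding k_def D1_def D2_def max_def by auto
  have above: "\<And>j. j \<in> {1..i} \<Longrightarrow> j > k \<Longrightarrow> c j = e j"
    using a1 a2 unfolding k_def by simp
  have ltk: "lt (c k) (e k)"
  proof (cases "k1 = k2")
    case True then show ?thesis using l1 l2 tr unfolding k_def by simp
  next
    case False
    show ?thesis
    proof (cases "k1 < k2")
      case True
      then have "c k2 = d k2" using a1 k2in unfolding D2_def by auto
      then show ?thesis using l2 True unfolding k_def by simp
    next
      case F: False
      then have "k2 < k1" using False by simp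
      then have "d k1 = e k1" using a2 k1in unfolding D1_def by auto
      then show ?thesis using l1 F unfolding k_def by simp
    qed
  qed
  have kD3: "k \<in> D3" using ltk irr kin unfolding D3_def by auto
  have "Max D3 = k"
  proof (rule Max_eqI[OF fin(3)])
    fix j assume "j \<in> D3" then show "j \<le> k" using above unfolding D3_def by force
  qed (rule kD3)
  then show ?thesis unfolding clex_def using kD3 ltk unfolding D3_def by auto
qed

lemma finite_min_exists:
  assumes "finite S" "S \<noteq> {}"
    and tot: "\<And>x y. x\<in>S \<Longrightarrow> y\<in>S \<Longrightarrow> x \<noteq> y \<Longrightarrow> R x y \<or> R y x"
    and tr: "\<And>x y z. x\<in>S \<Longrightarrow> y\<in>S \<Longrightarrow> z\<in>S \<Longrightarrow> R x y \<Longrightarrow> R y z \<Longrightarrow> R x z"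
  shows "\<exists>a\<in>S. \<forall>y\<in>S. y \<noteq> a \<longrightarrow> R a y"
  using assms(1,2,3,4)
proof (induction S rule: finite_ne_induct)
  case (singleton x) show ?case by simp
next
  case (insert x F)
  have totF: "R u v \<or> R v u" if "u\<in>F" "v\<in>F" "u \<noteq> v" for u v
    using insert.prems(1)[of u v] that by simp
  have trF: "R u w" if "u\<in>F" "v\<in>F" "w\<in>F" "R u v" "R v w" for u v w
    using insert.prems(2)[of u v w] that by simp
  have "\<exists>a\<in>F. \<forall>y\<in>F. y \<noteq> a \<longrightarrow> R a y"
  proof (rule insert.IH)
    fix u v assume "u\<in>F" "v\<in>F" "u \<noteq> v" then show "R u v \<or> R v u" by (rule totF)
  next
    fix u v w assume "u\<in>F" "v\<in>F" "w\<in>F" "R u v" "R v w" then show "R u w" by (rule trF)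
  qed
  then obtain a where a: "a \<in> F" "\<forall>y\<in>F. y \<noteq> a \<longrightarrow> R a y" by blast
  have "x \<noteq> a" using insert.hyps a(1) by auto
  show ?case
  proof (cases "R x a")
    case True
    have "\<forall>y\<in>insert x F. y \<noteq> x \<longrightarrow> R x y"
    proof (intro ballI impI)
      fix y assume y: "y \<in> insert x F" "y \<noteq> x"
      then have yF: "y \<in> F" by simp
      show "R x y"
      proof (cases "y = a")
        case True then show ?thesis using \<open>R x a\<close> by simp
      next
        case False
        then have "R a y" using a yF by blast
        then show ?thesis using insert.prems(2)[of x a y] \<open>R x a\<close> a(1) yF by simp
      qed
    qed
    then show ?thesis by blast
  next
    case False
    then have "R a x" using insert.prems(1)[of x a] a(1) \<open>x \<noteq> a\<close> by simp
    then show ?thesis using a by blast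
  qed
qed


lemma lex_char:
  assumes ob: "ordered_basis n b" and i: "i \<in> {1..n}"
    and x: "x \<in> Vsp b i - Vsp b (i - 1)" and y: "y \<in> Vsp b i - Vsp b (i - 1)"
    and cx: "x = lcomb cx b {1..i}" and cy: "y = lcomb cy b {1..i}"
  shows "lex_less lt n b x y \<longleftrightarrow> clex lt i cx cy"
proof -
  have iln: "i \<le> n" using i by simp
  have uq: "\<And>c d j. lcomb c b {1..i} = lcomb d b {1..i} \<Longrightarrow> j \<in> {1..i} \<Longrightarrow> c j = d j"
    using coeff_unique[OF ob iln] by blast
  have neq: "x \<noteq> y \<longleftrightarrow> {j\<in>{1..i}. cx j \<noteq> cy j} \<noteq> {}"
  proof
    assume "x \<noteq> y"
    show "{j\<in>{1..i}. cx j \<noteq> cy j} \<noteq> {}"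
    proof
      assume "{j\<in>{1..i}. cx j \<noteq> cy j} = {}"
      then have "lcomb cx b {1..i} = lcomb cy b {1..i}" by (intro lcomb_cong) auto
      then show False using \<open>x \<noteq> y\<close> cx cy by simp
    qed
  next
    assume "{j\<in>{1..i}. cx j \<noteq> cy j} \<noteq> {}"
    then obtain j where "j \<in> {1..i}" "cx j \<noteq> cy j" by auto
    then show "x \<noteq> y" using uq cx cy by metis
  qed
  show ?thesis
  proof
    assume "lex_less lt n b x y"
    then obtain i' where i': "i' \<in> {1..n}" and
      disj: "(x \<in> Vsp b (i' - 1) \<and> y \<in> Vsp b i' - Vsp b (i' - 1)) \<or>
     (x \<in> Vsp b i' - Vsp b (i' - 1) \<and> y \<in> Vsp b i' - Vsp b (i' - 1) \<and> x \<noteq> y \<and>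
      (\<exists>cx cy. x = lcomb cx b {1..i'} \<and> y = lcomb cy b {1..i'} \<and>
         (let k = Max {j\<in>{1..i'}. cx j \<noteq> cy j} in lt (cx k) (cy k))))"
      unfolding lex_less_def by blast
    have "y \<in> Vsp b i' - Vsp b (i' - 1)" using disj by blast
    then have ii: "i' = i" using layer_unique y by metis
    have "\<not> (x \<in> Vsp b (i' - 1))" using x ii by simp
    then have "x \<noteq> y" and "\<exists>cx cy. x = lcomb cx b {1..i} \<and> y = lcomb cy b {1..i} \<and>
         (let k = Max {j\<in>{1..i}. cx j \<noteq> cy j} in lt (cx k) (cy k))"
      using disj ii by auto
    then obtain cx' cy' where e: "x = lcomb cx' b {1..i}" "y = lcomb cy' b {1..i}"
      and l: "lt (cx' (Max {j\<in>{1..i}. cx' j \<noteq> cy' j})) (cy' (Max {j\<in>{1..i}. cx' j \<noteq> cy' j}))"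
      unfolding Let_def by blast
    have ex: "\<And>j. j \<in> {1..i} \<Longrightarrow> cx' j = cx j" using uq e cx by metis
    have ey: "\<And>j. j \<in> {1..i} \<Longrightarrow> cy' j = cy j" using uq e cy by metis
    have DD: "{j\<in>{1..i}. cx' j \<noteq> cy' j} = {j\<in>{1..i}. cx j \<noteq> cy j}" using ex ey by auto
    have ne: "{j\<in>{1..i}. cx j \<noteq> cy j} \<noteq> {}" using neq \<open>x \<noteq> y\<close> by simp
    have "Max {j\<in>{1..i}. cx j \<noteq> cy j} \<in> {j\<in>{1..i}. cx j \<noteq> cy j}"
      using ne by (intro Max_in) auto
    then have "Max {j\<in>{1..i}. cx j \<noteq> cy j} \<in> {1..i}" by simp
    then show "clex lt i cx cy" using l ne unfolding clex_def DD using ex ey by simp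
  next
    assume c: "clex lt i cx cy"
    then have "x \<noteq> y" using neq unfolding clex_def by simp
    then show "lex_less lt n b x y" unfolding lex_less_def
      using i x y cx cy c unfolding clex_def Let_def by blast
  qed
qed

lemma lex_props:
  assumes ob: "ordered_basis n b" and i: "i \<in> {1..n}" and sto: "strict_total_order lt"
  defines "W \<equiv> Vsp b i - Vsp b (i - 1)"
  shows "\<And>x y. x \<in> W \<Longrightarrow> y \<in> W \<Longrightarrow> x \<noteq> y \<Longrightarrow> lex_less lt n b x y \<or> lex_less lt n b y x"
    and "\<And>x y z. x \<in> W \<Longrightarrow> y \<in> W \<Longrightarrow> z \<in> W \<Longrightarrow> lex_less lt n b x y \<Longrightarrow> lex_less lt n b y z
          \<Longrightarrow> lex_less lt n b x z"
    and "\<And>x y. x \<in> W \<Longrightarrow> y \<in> W \<Longrightarrow> lex_less lt n b x y \<Longrightarrow> lex_less lt n b y x \<Longrightarrow> False"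
proof -
  have co: "\<exists>c. x = lcomb c b {1..i}" if "x \<in> W" for x
    using that unfolding W_def Vsp_def by auto
  {
    fix x y assume xy: "x \<in> W" "y \<in> W" "x \<noteq> y"
    obtain cx cy where c: "x = lcomb cx b {1..i}" "y = lcomb cy b {1..i}" using co xy by metis
    have "{j\<in>{1..i}. cx j \<noteq> cy j} \<noteq> {}"
    proof
      assume "{j\<in>{1..i}. cx j \<noteq> cy j} = {}"
      then have "lcomb cx b {1..i} = lcomb cy b {1..i}" by (intro lcomb_cong) auto
      then show False using xy c by simp
    qed
    then have "clex lt i cx cy \<or> clex lt i cy cx" by (rule clex_total[OF sto])
    then show "lex_less lt n b x y \<or> lex_less lt n b y x"
      using lex_char[OF ob i _ _ c] lex_char[OF ob i _ _ c(2) c(1)] xy unfolding W_def by blast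
  }
  {
    fix x y z assume xyz: "x \<in> W" "y \<in> W" "z \<in> W" "lex_less lt n b x y" "lex_less lt n b y z"
    obtain cx cy cz where c: "x = lcomb cx b {1..i}" "y = lcomb cy b {1..i}" "z = lcomb cz b {1..i}"
      using co xyz(1-3) by metis
    have "clex lt i cx cy" using lex_char[OF ob i _ _ c(1,2)] xyz unfolding W_def by blast
    moreover have "clex lt i cy cz" using lex_char[OF ob i _ _ c(2,3)] xyz unfolding W_def by blast
    ultimately have "clex lt i cx cz" by (rule clex_trans[OF sto])
    then show "lex_less lt n b x z" using lex_char[OF ob i _ _ c(1,3)] xyz unfolding W_def by blast
  }
  {
    fix x y assume xy: "x \<in> W" "y \<in> W" "lex_less lt n b x y" "lex_less lt n b y x"
    obtain cx cy where c: "x = lcomb cx b {1..i}" "y = lcomb cy b {1..i}" using co xy by metis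
    have "clex lt i cx cy" using lex_char[OF ob i _ _ c(1,2)] xy unfolding W_def by blast
    moreover have "clex lt i cy cx" using lex_char[OF ob i _ _ c(2,1)] xy unfolding W_def by blast
    ultimately show False by (rule clex_asym[OF sto])
  }
qed


lemma greedy_sel_some:
  fixes lt :: "'a::{ring_1,finite} \<Rightarrow> 'a \<Rightarrow> bool"
  assumes ob: "ordered_basis n b" and sto: "strict_total_order lt" and i: "i \<in> {1..n}"
    and g: "greedy_sel lt n b P \<Gamma> i C = Some a"
  shows "a \<in> Vsp b i - Vsp b (i - 1) \<and> (\<forall>\<gamma>\<in>\<Gamma>. \<forall>c\<in>C. P (\<lambda>k. \<gamma> * a k + c k))"
proof -
  define S where "S = {a \<in> Vsp b i - Vsp b (i - 1). \<forall>\<gamma>\<in>\<Gamma>. \<forall>c\<in>C. P (\<lambda>k. \<gamma> * a k + c k)}"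
  have g': "(if S = {} then None
      else Some (THE a. a \<in> S \<and> (\<forall>y\<in>S. y \<noteq> a \<longrightarrow> lex_less lt n b a y))) = Some a"
    using g unfolding greedy_sel_def Let_def S_def by simp
  then have ne: "S \<noteq> {}" by (cases "S = {}") auto
  with g' have aeq: "a = (THE a. a \<in> S \<and> (\<forall>y\<in>S. y \<noteq> a \<longrightarrow> lex_less lt n b a y))" by simp
  have SW: "S \<subseteq> Vsp b i - Vsp b (i - 1)" unfolding S_def by blast
  have fin: "finite S"
    by (rule finite_subset[OF SW]) (rule finite_Diff, rule Vsp_finite, simp)
  note lp = lex_props[OF ob i sto]
  have ex: "\<exists>a\<in>S. \<forall>y\<in>S. y \<noteq> a \<longrightarrow> lex_less lt n b a y"
  proof (rule finite_min_exists[OF fin ne])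
    fix x y assume "x \<in> S" "y \<in> S" "x \<noteq> y"
    then show "lex_less lt n b x y \<or> lex_less lt n b y x" using lp(1)[of x y] SW by (simp add: subset_iff)
  next
    fix x y z assume "x \<in> S" "y \<in> S" "z \<in> S" "lex_less lt n b x y" "lex_less lt n b y z"
    then show "lex_less lt n b x z" using lp(2)[of x y z] SW by (simp add: subset_iff)
  qed
  have "\<exists>!a. a \<in> S \<and> (\<forall>y\<in>S. y \<noteq> a \<longrightarrow> lex_less lt n b a y)"
  proof (rule ex_ex1I)
    show "\<exists>a. a \<in> S \<and> (\<forall>y\<in>S. y \<noteq> a \<longrightarrow> lex_less lt n b a y)" using ex by blast
  next
    fix a1 a2 assume h1: "a1 \<in> S \<and> (\<forall>y\<in>S. y \<noteq> a1 \<longrightarrow> lex_less lt n b a1 y)"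
      and h2: "a2 \<in> S \<and> (\<forall>y\<in>S. y \<noteq> a2 \<longrightarrow> lex_less lt n b a2 y)"
    show "a1 = a2"
    proof (rule ccontr)
      assume "a1 \<noteq> a2"
      then have "lex_less lt n b a1 a2" "lex_less lt n b a2 a1" using h1 h2 by auto
      then show False using lp(3)[of a1 a2] h1 h2 SW by (simp add: subset_iff)
    qed
  qed
  then have "a \<in> S" unfolding aeq by (rule theI'[THEN conjunct1])
  then show ?thesis unfolding S_def by blast
qed


lemma lcomb_add: "(\<lambda>k. lcomb c v J k + lcomb d v J k) = lcomb (\<lambda>j. c j + d j) v J"
  unfolding lcomb_def by (simp add: sum.distrib distrib_right)

lemma lcomb_smult: "(\<lambda>k. r * lcomb c v J k) = lcomb (\<lambda>j. r * c j) v J"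
  unfolding lcomb_def by (simp add: sum_distrib_left mult.assoc)

lemma lcomb_zero: "lcomb (\<lambda>j. 0) v J = vzero"
  unfolding lcomb_def vzero_def by simp

lemma lcomb_insert:
  assumes "finite J" "j \<notin> J"
  shows "lcomb c v (insert j J) = (\<lambda>k. c j * v j k + lcomb c v J k)"
  unfolding lcomb_def using assms by (simp add: sum.insert)

lemma main_aux:
  fixes lt :: "'a::{ring_1,finite} \<Rightarrow> 'a \<Rightarrow> bool"
    and n :: nat
    and b :: "nat \<Rightarrow> nat \<Rightarrow> 'a"
    and P :: "(nat \<Rightarrow> 'a) \<Rightarrow> bool"
    and \<Gamma> :: "'a set"
  assumes ob: "ordered_basis n b" and sto: "strict_total_order lt"
    and nP: "\<not> P vzero" and gs: "generator_system \<Gamma>"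
  shows "i \<le> n \<Longrightarrow> (\<forall>c. lcomb c (sel_vec lt n b P \<Gamma>) {j\<in>{1..i}. selected lt n b P \<Gamma> j} = vzero
              \<longrightarrow> (\<forall>j\<in>{j\<in>{1..i}. selected lt n b P \<Gamma> j}. c j = 0))
       \<and> greedy_code lt n b P \<Gamma> i =
           {lcomb c (sel_vec lt n b P \<Gamma>) {j\<in>{1..i}. selected lt n b P \<Gamma> j} | c. True}"
proof (induction i)
  case 0
  have e: "\<And>c. lcomb c (sel_vec lt n b P \<Gamma>) {} = vzero" by (simp add: lcomb_def vzero_def)
  have J0: "{j\<in>{1..0::nat}. selected lt n b P \<Gamma> j} = {}" by simp
  show ?case unfolding J0 e by simp
next
  case (Suc i)
  let ?av = "sel_vec lt n b P \<Gamma>"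
  let ?J = "{j\<in>{1..i}. selected lt n b P \<Gamma> j}"
  let ?J' = "{j\<in>{1..Suc i}. selected lt n b P \<Gamma> j}"
  let ?C = "greedy_code lt n b P \<Gamma> i"
  from Suc have IH1: "\<And>c. lcomb c ?av ?J = vzero \<Longrightarrow> (\<forall>j\<in>?J. c j = 0)"
    and IH2: "?C = {lcomb c ?av ?J | c. True}" by auto
  have finJ: "finite ?J" by simp
  have nJ: "Suc i \<notin> ?J" by simp
  have Jsplit: "?J' = (if selected lt n b P \<Gamma> (Suc i) then insert (Suc i) ?J else ?J)"
    by (auto simp: le_Suc_eq)
  show ?case
  proof (cases "greedy_sel lt n b P \<Gamma> (Suc i) ?C")
    case None
    then have "\<not> selected lt n b P \<Gamma> (Suc i)" unfolding selected_def by simp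
    then have "?J' = ?J" using Jsplit by simp
    moreover have "greedy_code lt n b P \<Gamma> (Suc i) = ?C" using None by simp
    ultimately show ?thesis using Suc by simp
  next
    case (Some a')
    then have sel: "selected lt n b P \<Gamma> (Suc i)" unfolding selected_def by simp
    then have J': "?J' = insert (Suc i) ?J" using Jsplit by simp
    have av: "?av (Suc i) = a'" unfolding sel_vec_def using Some by simp
    have code: "greedy_code lt n b P \<Gamma> (Suc i) = {(\<lambda>k. r * a' k + c k) | r c. c \<in> ?C}"
      using Some by simp
    have lc: "lcomb c ?av ?J' = (\<lambda>k. c (Suc i) * a' k + lcomb c ?av ?J k)" for c
      unfolding J' using lcomb_insert[OF finJ nJ, of c ?av] av by simp
    have ga: "a' \<in> Vsp b (Suc i) - Vsp b (Suc i - 1) \<and> (\<forall>\<gamma>\<in>\<Gamma>. \<forall>c\<in>?C. P (\<lambda>k. \<gamma> * a' k + c k))"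
      using greedy_sel_some[OF ob sto _ Some] Suc.prems by simp
    have lcJ: "lcomb c ?av ?J = lcomb (c(Suc i := r)) ?av ?J" for c r
      by (rule lcomb_cong) auto
    have span: "greedy_code lt n b P \<Gamma> (Suc i) = {lcomb c ?av ?J' | c. True}"
    proof
      show "greedy_code lt n b P \<Gamma> (Suc i) \<subseteq> {lcomb c ?av ?J' | c. True}"
      proof
        fix x assume "x \<in> greedy_code lt n b P \<Gamma> (Suc i)"
        then obtain r c0 where x: "x = (\<lambda>k. r * a' k + c0 k)" and "c0 \<in> ?C" using code by blast
        then obtain d where d: "c0 = lcomb d ?av ?J" using IH2 by blast
        have "x = lcomb (d(Suc i := r)) ?av ?J'" unfolding lc x d using lcJ[of d r] by simp
        then show "x \<in> {lcomb c ?av ?J' | c. True}" by blast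
      qed
    next
      show "{lcomb c ?av ?J' | c. True} \<subseteq> greedy_code lt n b P \<Gamma> (Suc i)"
      proof
        fix x assume "x \<in> {lcomb c ?av ?J' | c. True}"
        then obtain c where x: "x = lcomb c ?av ?J'" by blast
        have "lcomb c ?av ?J \<in> ?C" using IH2 by blast
        then show "x \<in> greedy_code lt n b P \<Gamma> (Suc i)" unfolding code x lc by blast
      qed
    qed
    have indep: "\<forall>j\<in>?J'. c j = 0" if hc: "lcomb c ?av ?J' = vzero" for c
    proof -
      have mem: "lcomb d ?av ?J \<in> ?C" for d
      proof -
        have "lcomb d ?av ?J \<in> {lcomb c ?av ?J | c. True}" by blast
        then show ?thesis by (simp only: IH2)
      qed
      have memC: "\<exists>d. x = lcomb d ?av ?J" if "x \<in> ?C" for x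
      proof -
        have "x \<in> {lcomb c ?av ?J | c. True}" using that by (simp only: IH2)
        then show ?thesis by blast
      qed
      have Cadd: "(\<lambda>k. x k + y k) \<in> ?C" if hx: "x \<in> ?C" and hy: "y \<in> ?C" for x y
      proof -
        obtain cx where cx: "x = lcomb cx ?av ?J" using memC[OF hx] by blast
        obtain cy where cy: "y = lcomb cy ?av ?J" using memC[OF hy] by blast
        have "(\<lambda>k. x k + y k) = lcomb (\<lambda>j. cx j + cy j) ?av ?J"
          unfolding cx cy by (rule lcomb_add)
        then show ?thesis using mem by simp
      qed
      have Csm: "(\<lambda>k. r * x k) \<in> ?C" if hx: "x \<in> ?C" for x r
      proof -
        obtain cx where cx: "x = lcomb cx ?av ?J" using memC[OF hx] by blast
        have "(\<lambda>k. r * x k) = lcomb (\<lambda>j. r * cx j) ?av ?J"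
          unfolding cx by (rule lcomb_smult)
        then show ?thesis using mem by simp
      qed
      have C0: "vzero \<in> ?C" using mem[of "\<lambda>j. 0"] unfolding lcomb_zero .
      define I where "I = {r. (\<lambda>k. r * a' k) \<in> ?C}"
      have li: "left_ideal I"
        unfolding left_ideal_def
      proof (intro conjI allI ballI impI)
        show "0 \<in> I" unfolding I_def using C0 unfolding vzero_def by simp
      next
        fix x y assume "x \<in> I" "y \<in> I"
        then have "(\<lambda>k. x * a' k + y * a' k) \<in> ?C" unfolding I_def using Cadd by blast
        then show "x + y \<in> I" unfolding I_def by (simp add: distrib_right)
      next
        fix r x assume "x \<in> I"
        then have "(\<lambda>k. r * (x * a' k)) \<in> ?C" unfolding I_def using Csm by blast
        then show "r * x \<in> I" unfolding I_def by (simp add: mult.assoc)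
      qed
      have eq0: "(\<lambda>k. c (Suc i) * a' k + lcomb c ?av ?J k) = (\<lambda>k. 0)"
        using hc lc[of c] unfolding vzero_def by simp
      have "(\<lambda>k. c (Suc i) * a' k) = (\<lambda>k. (-1) * lcomb c ?av ?J k)"
      proof
        fix k have "c (Suc i) * a' k + lcomb c ?av ?J k = 0" using fun_cong[OF eq0, of k] by simp
        then show "c (Suc i) * a' k = (-1) * lcomb c ?av ?J k" by (simp add: eq_neg_iff_add_eq_0)
      qed
      moreover have "(\<lambda>k. (-1) * lcomb c ?av ?J k) \<in> ?C"
        by (rule Csm) (rule mem)
      ultimately have ciI: "c (Suc i) \<in> I" unfolding I_def by simp
      have ci0: "c (Suc i) = 0"
      proof (rule ccontr)
        assume "c (Suc i) \<noteq> 0"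
        then have "I \<noteq> {0}" using ciI by auto
        then obtain \<gamma> where g: "\<gamma> \<in> \<Gamma>" "I = range (\<lambda>r. r * \<gamma>)"
          using gs li unfolding generator_system_def by blast
        have "\<gamma> \<in> I" unfolding g(2) by (rule range_eqI[of _ _ 1]) simp
        then have "(\<lambda>k. \<gamma> * a' k) \<in> ?C" unfolding I_def by simp
        then have m: "(\<lambda>k. (-1) * (\<gamma> * a' k)) \<in> ?C" by (rule Csm)
        have "P (\<lambda>k. \<gamma> * a' k + (-1) * (\<gamma> * a' k))"
          using bspec[OF bspec[OF conjunct2[OF ga] g(1)] m] by simp
        moreover have "(\<lambda>k. \<gamma> * a' k + (-1) * (\<gamma> * a' k)) = vzero" unfolding vzero_def by simp
        ultimately show False using nP by simp
      qed
      then have "(\<lambda>k. lcomb c ?av ?J k) = (\<lambda>k. 0)" using eq0 by simp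
      then have "lcomb c ?av ?J = vzero" unfolding vzero_def by simp
      then have "\<forall>j\<in>?J. c j = 0" by (rule IH1)
      then show ?thesis using ci0 J' by simp
    qed
    show ?thesis using span indep by blast
  qed
qed

theorem mainTheorem9:
  fixes lt :: "'a::{ring_1,finite} \<Rightarrow> 'a \<Rightarrow> bool"
    and n :: nat
    and b :: "nat \<Rightarrow> nat \<Rightarrow> 'a"
    and P :: "(nat \<Rightarrow> 'a) \<Rightarrow> bool"
    and \<Gamma> :: "'a set"
  assumes "principal_left_ideal_ring TYPE('a)"
    and "respectful lt"
    and "ordered_basis n b"
    and "left_multiplicative n P"
    and "\<not> P vzero"
    and "generator_system \<Gamma>"
    and "i \<le> n"
  shows "(\<forall>c. lcomb c (sel_vec lt n b P \<Gamma>) {j\<in>{1..i}. selected lt n b P \<Gamma> j} = vzero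
              \<longrightarrow> (\<forall>j\<in>{j\<in>{1..i}. selected lt n b P \<Gamma> j}. c j = 0))
       \<and> greedy_code lt n b P \<Gamma> i =
           {lcomb c (sel_vec lt n b P \<Gamma>) {j\<in>{1..i}. selected lt n b P \<Gamma> j} | c. True}"
proof -
  have sto: "strict_total_order lt" using assms(2) unfolding respectful_def by simp
  show ?thesis by (rule main_aux[where P=P and lt=lt and n=n and b=b, OF assms(3) sto assms(5) assms(6) assms(7)])
qed

end
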